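(* There is no $\mathcal{R}$-commutative T2R semigroup.
   Context: A semigroup $S$ is $\mathcal{R}$-commutative if for every $s,t\in S$ there is an element $r\in S^1$ (where $S^1$ is $S$ with an identity adjoined) such that $st=tsr$. A semigroup $S$ is a $\Delta$-semigroup if the lattice of all congruences of $S$ is a chain with respect to inclusion. A semigroup $N$ with zero $0$ is nil if every element has some power equal to $0$; non-trivial means having more than one element. A T2R semigroup is a $\Delta$-semigroup $S$ which is the disjoint union of a non-trivial nil ideal $S_0$ (with zero $0$, which is then the zero of $S$) and a subsemigroup $S_1=\{u,v\}$, $u\neq v$, which is a right zero semigroup ($xy=y$ for $x,y\in S_1$). *)

theory Defs
  imports Main
begin

definition semigroup_on :: "'a set \<Rightarrow> ('a \<Rightarrow> 'a \<Rightarrow> 'a) \<Rightarrow> bool" where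
  "semigroup_on S f \<longleftrightarrow> (\<forall>x\<in>S. \<forall>y\<in>S. f x y \<in> S) \<and>
     (\<forall>x\<in>S. \<forall>y\<in>S. \<forall>z\<in>S. f (f x y) z = f x (f y z))"

text \<open>R-commutative: for all s t there is r in S^1 with st = tsr (r = 1 gives st = ts).\<close>
definition R_commutative :: "'a set \<Rightarrow> ('a \<Rightarrow> 'a \<Rightarrow> 'a) \<Rightarrow> bool" where
  "R_commutative S f \<longleftrightarrow> (\<forall>s\<in>S. \<forall>t\<in>S. f s t = f t s \<or> (\<exists>r\<in>S. f s t = f (f t s) r))"

definition congruence_on :: "'a set \<Rightarrow> ('a \<Rightarrow> 'a \<Rightarrow> 'a) \<Rightarrow> ('a \<times> 'a) set \<Rightarrow> bool" where
  "congruence_on S f \<rho> \<longleftrightarrow> equiv S \<rho> \<and>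
     (\<forall>a b c. (a, b) \<in> \<rho> \<longrightarrow> c \<in> S \<longrightarrow> (f c a, f c b) \<in> \<rho> \<and> (f a c, f b c) \<in> \<rho>)"

definition Delta_semigroup :: "'a set \<Rightarrow> ('a \<Rightarrow> 'a \<Rightarrow> 'a) \<Rightarrow> bool" where
  "Delta_semigroup S f \<longleftrightarrow> semigroup_on S f \<and>
     (\<forall>\<rho> \<sigma>. congruence_on S f \<rho> \<longrightarrow> congruence_on S f \<sigma> \<longrightarrow> \<rho> \<subseteq> \<sigma> \<or> \<sigma> \<subseteq> \<rho>)"

text \<open>spow f x n = x^(n+1).\<close>
primrec spow :: "('a \<Rightarrow> 'a \<Rightarrow> 'a) \<Rightarrow> 'a \<Rightarrow> nat \<Rightarrow> 'a" where
  "spow f x 0 = x"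
| "spow f x (Suc n) = f (spow f x n) x"

definition ideal_of :: "'a set \<Rightarrow> ('a \<Rightarrow> 'a \<Rightarrow> 'a) \<Rightarrow> 'a set \<Rightarrow> bool" where
  "ideal_of S f I \<longleftrightarrow> I \<noteq> {} \<and> I \<subseteq> S \<and> (\<forall>x\<in>I. \<forall>y\<in>S. f x y \<in> I \<and> f y x \<in> I)"

definition nil_with_zero :: "'a set \<Rightarrow> ('a \<Rightarrow> 'a \<Rightarrow> 'a) \<Rightarrow> 'a \<Rightarrow> bool" where
  "nil_with_zero N f z \<longleftrightarrow> z \<in> N \<and> (\<forall>x\<in>N. f z x = z \<and> f x z = z) \<and>
     (\<forall>x\<in>N. \<exists>n. spow f x n = z)"

definition T2R :: "'a set \<Rightarrow> ('a \<Rightarrow> 'a \<Rightarrow> 'a) \<Rightarrow> bool" where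
  "T2R S f \<longleftrightarrow> Delta_semigroup S f \<and>
     (\<exists>S0 z u v. S = S0 \<union> {u, v} \<and> S0 \<inter> {u, v} = {} \<and> u \<noteq> v \<and>
        ideal_of S f S0 \<and> nil_with_zero S0 f z \<and> (\<exists>x\<in>S0. x \<noteq> z) \<and>
        (\<forall>x\<in>{u, v}. \<forall>y\<in>{u, v}. f x y = y))"

end

theory Submission
  imports Defs
begin

lemma key:
  assumes cl: "\<forall>x\<in>S. \<forall>y\<in>S. f x y \<in> S"
    and as: "\<forall>x\<in>S. \<forall>y\<in>S. \<forall>z\<in>S. f (f x y) z = f x (f y z)"
    and Rc: "R_commutative S f" and u: "u\<in>S" and v: "v\<in>S" and q: "q\<in>S"
    and vu: "f v u = u"
  shows "\<exists>w\<in>S. f u q = f (f v q) w"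
proof -
  from Rc have A: "f u q = f q u \<or> (\<exists>r\<in>S. f u q = f (f q u) r)"
    unfolding R_commutative_def using u q by blast
  from Rc have B: "f q v = f v q \<or> (\<exists>r\<in>S. f q v = f (f v q) r)"
    unfolding R_commutative_def using v q by blast
  have C: "f q u = f (f q v) u" using as q u v vu by metis
  have vq: "f v q \<in> S" using cl v q by blast
  have D: "\<exists>w\<in>S. f q u = f (f v q) w"
    using B
  proof
    assume "f q v = f v q" thus ?thesis using C u by auto
  next
    assume "\<exists>r\<in>S. f q v = f (f v q) r"
    then obtain r where r: "r\<in>S" "f q v = f (f v q) r" by blast
    hence "f q u = f (f v q) (f r u)" using C as vq r u by metis
    thus ?thesis using cl r u by blast
  qed
  then obtain w where w: "w\<in>S" "f q u = f (f v q) w" by blast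
  from A show ?thesis
  proof
    assume "f u q = f q u" thus ?thesis using w by auto
  next
    assume "\<exists>r\<in>S. f u q = f (f q u) r"
    then obtain r where r: "r\<in>S" "f u q = f (f q u) r" by blast
    hence "f u q = f (f v q) (f w r)" using w as vq by metis
    thus ?thesis using cl r w by blast
  qed
qed

theorem mainTheorem9:
  fixes S :: "'a set" and f :: "'a \<Rightarrow> 'a \<Rightarrow> 'a"
  shows "\<not> (T2R S f \<and> R_commutative S f)"
proof
  assume H: "T2R S f \<and> R_commutative S f"
  hence Rc: "R_commutative S f" by blast
  from H have D: "Delta_semigroup S f" unfolding T2R_def by blast
  hence sg: "semigroup_on S f" unfolding Delta_semigroup_def by blast
  have cl: "\<forall>x\<in>S. \<forall>y\<in>S. f x y \<in> S" using sg unfolding semigroup_on_def by blast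
  have as: "\<forall>x\<in>S. \<forall>y\<in>S. \<forall>z\<in>S. f (f x y) z = f x (f y z)"
    using sg unfolding semigroup_on_def by blast
  have chain: "\<And>\<rho> \<sigma>. congruence_on S f \<rho> \<Longrightarrow> congruence_on S f \<sigma> \<Longrightarrow> \<rho> \<subseteq> \<sigma> \<or> \<sigma> \<subseteq> \<rho>"
    using D unfolding Delta_semigroup_def by blast
  from H obtain S0 z u v where SS: "S = S0 \<union> {u, v}" and dj: "S0 \<inter> {u, v} = {}"
    and uv: "u \<noteq> v" and id: "ideal_of S f S0" and nz: "nil_with_zero S0 f z"
    and ex: "\<exists>x\<in>S0. x \<noteq> z" and rz: "\<forall>x\<in>{u, v}. \<forall>y\<in>{u, v}. f x y = y"
    unfolding T2R_def by blast
  have zS0: "z \<in> S0" using nz unfolding nil_with_zero_def by blast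
  have zl0: "\<And>x. x\<in>S0 \<Longrightarrow> f z x = z" using nz unfolding nil_with_zero_def by blast
  have idl: "\<And>x y. x\<in>S0 \<Longrightarrow> y\<in>S \<Longrightarrow> f x y \<in> S0 \<and> f y x \<in> S0"
    using id unfolding ideal_of_def by blast
  have S0S: "S0 \<subseteq> S" using SS by blast
  have uS: "u\<in>S" and vS: "v\<in>S" using SS by auto
  have un: "u \<notin> S0" and vn: "v \<notin> S0" using dj by auto
  have zS: "\<And>y. y\<in>S \<Longrightarrow> f z y = z"
  proof -
    fix y assume y: "y\<in>S"
    have a: "f z y \<in> S0" using idl zS0 y by blast
    have "f z (f z y) = z" using zl0 a by blast
    moreover have "f z (f z y) = f (f z z) y" using as zS0 S0S y by (metis subsetD)
    moreover have "f z z = z" using zl0 zS0 by blast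
    ultimately show "f z y = z" by simp
  qed
  have ruv: "f u v = v" "f v u = u" "f u u = u" "f v v = v" using rz by auto
  have k1: "\<And>q. q\<in>S \<Longrightarrow> \<exists>w\<in>S. f u q = f (f v q) w"
    using key[OF cl as Rc uS vS _ ruv(2)] by blast
  have k2: "\<And>q. q\<in>S \<Longrightarrow> \<exists>w\<in>S. f v q = f (f u q) w"
    using key[OF cl as Rc vS uS _ ruv(1)] by blast
  define C where "C x y \<longleftrightarrow> (x = z \<longleftrightarrow> y = z) \<and> (\<forall>p\<in>S. f p x = z \<longleftrightarrow> f p y = z)
      \<and> (\<forall>q\<in>S. f x q = z \<longleftrightarrow> f y q = z) \<and> (\<forall>p\<in>S. \<forall>q\<in>S. f (f p x) q = z \<longleftrightarrow> f (f p y) q = z)"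
    for x y
  define \<beta> where "\<beta> = {(x, y). x \<in> S \<and> y \<in> S \<and> C x y}"
  define \<rho> where "\<rho> = S0 \<times> S0 \<union> Id_on S"
  have cb: "congruence_on S f \<beta>"
    unfolding congruence_on_def
  proof (intro conjI allI impI)
    show "equiv S \<beta>" unfolding equiv_def refl_on_def sym_def trans_def \<beta>_def C_def
      by auto
  next
    fix a b c assume ab: "(a, b) \<in> \<beta>" and c: "c \<in> S"
    from ab have a: "a\<in>S" and b: "b\<in>S" and Cab: "C a b" unfolding \<beta>_def by auto
    have "C (f c a) (f c b)" unfolding C_def
    proof (intro conjI ballI)
      show "(f c a = z) = (f c b = z)" using Cab c unfolding C_def by blast
    next
      fix p assume p: "p\<in>S"
      have "f p (f c a) = f (f p c) a" "f p (f c b) = f (f p c) b" using as p c a b by metis+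
      moreover have "f p c \<in> S" using cl p c by blast
      ultimately show "(f p (f c a) = z) = (f p (f c b) = z)" using Cab unfolding C_def by auto
    next
      fix q assume q: "q\<in>S"
      show "(f (f c a) q = z) = (f (f c b) q = z)" using Cab c q unfolding C_def by blast
    next
      fix p q assume p: "p\<in>S" and q: "q\<in>S"
      have "f p (f c a) = f (f p c) a" "f p (f c b) = f (f p c) b" using as p c a b by metis+
      moreover have "f p c \<in> S" using cl p c by blast
      ultimately show "(f (f p (f c a)) q = z) = (f (f p (f c b)) q = z)"
        using Cab q unfolding C_def by auto
    qed
    moreover have "C (f a c) (f b c)" unfolding C_def
    proof (intro conjI ballI)
      show "(f a c = z) = (f b c = z)" using Cab c unfolding C_def by blast
    next
      fix p assume p: "p\<in>S"
      show "(f p (f a c) = z) = (f p (f b c) = z)"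
        using Cab c p as a b by (metis C_def)
    next
      fix q assume q: "q\<in>S"
      have "f (f a c) q = f a (f c q)" "f (f b c) q = f b (f c q)" using as q c a b by metis+
      moreover have "f c q \<in> S" using cl q c by blast
      ultimately show "(f (f a c) q = z) = (f (f b c) q = z)" using Cab unfolding C_def by auto
    next
      fix p q assume p: "p\<in>S" and q: "q\<in>S"
      have "f (f p (f a c)) q = f (f p a) (f c q)" "f (f p (f b c)) q = f (f p b) (f c q)"
        using as p q c a b cl by metis+
      moreover have "f c q \<in> S" using cl q c by blast
      ultimately show "(f (f p (f a c)) q = z) = (f (f p (f b c)) q = z)"
        using Cab p unfolding C_def by auto
    qed
    ultimately show "(f c a, f c b) \<in> \<beta>" "(f a c, f b c) \<in> \<beta>"
      unfolding \<beta>_def using cl a b c by auto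
  qed
  have cr: "congruence_on S f \<rho>"
    unfolding congruence_on_def
  proof (intro conjI allI impI)
    show "equiv S \<rho>" unfolding equiv_def refl_on_def sym_def trans_def \<rho>_def
      using S0S by auto
  next
    fix a b c assume ab: "(a, b) \<in> \<rho>" and c: "c \<in> S"
    show "(f c a, f c b) \<in> \<rho>" "(f a c, f b c) \<in> \<rho>"
      using ab c idl cl unfolding \<rho>_def by auto
  qed
  have uvb: "(u, v) \<in> \<beta>"
  proof -
    have Q: "\<And>q. q\<in>S \<Longrightarrow> \<exists>w\<in>S. \<exists>w'\<in>S. f u q = f (f v q) w \<and> f v q = f (f u q) w'"
      using k1 k2 by blast
    have "C u v" unfolding C_def
    proof (intro conjI ballI)
      show "(u = z) = (v = z)" using un vn zS0 by auto
    next
      fix p assume p: "p\<in>S"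
      have "f p v = f (f p u) v" "f p u = f (f p v) u" using as p uS vS ruv by metis+
      thus "(f p u = z) = (f p v = z)" using zS uS vS by metis
    next
      fix q assume q: "q\<in>S"
      thus "(f u q = z) = (f v q = z)" using Q zS by metis
    next
      fix p q assume p: "p\<in>S" and q: "q\<in>S"
      obtain w w' where w: "w\<in>S" "w'\<in>S" "f u q = f (f v q) w" "f v q = f (f u q) w'"
        using Q q by blast
      have e1: "f (f p u) q = f p (f u q)" "f (f p v) q = f p (f v q)" using as p q uS vS by metis+
      have "f p (f u q) = f (f p (f v q)) w" using as p w cl q vS by metis
      moreover have "f p (f v q) = f (f p (f u q)) w'" using as p w cl q uS by metis
      ultimately show "(f (f p u) q = z) = (f (f p v) q = z)" using e1 zS w by metis
    qed
    thus ?thesis unfolding \<beta>_def using uS vS by auto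
  qed
  from chain[OF cb cr] show False
  proof
    assume "\<beta> \<subseteq> \<rho>" thus False using uvb un uv unfolding \<rho>_def by auto
  next
    assume sub: "\<rho> \<subseteq> \<beta>"
    obtain x where x: "x\<in>S0" "x \<noteq> z" using ex by blast
    hence "(x, z) \<in> \<rho>" unfolding \<rho>_def using zS0 by auto
    hence "(x, z) \<in> \<beta>" using sub by blast
    thus False using x unfolding \<beta>_def C_def by auto
  qed
qed

end
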